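(* In the setting described in the context: (a) if $S(i)=S(i+1)$ for every $i\in E$ (the signal is constant on each $A_i$), then $\sum_{z=0}^{N/2-1}|(W\lambda)(z)|^2\ge1-\frac{2M}{N}$; (b) if $S(i)\ne S(i+1)$ for every $i\in E$ (the signal is balanced on each $A_i$), then $\sum_{z=N/2}^{N-1}|(W\lambda)(z)|^2\ge1-\frac{2M}{N}$. The same two conclusions hold with $W$ replaced by $W_1$.
   Context: Let $N=2^n$, $n\ge1$, and $M\ge1$ with $2M<N$. Let $E\subset\{0,\dots,N-1\}$ be a set of $M$ even labels, $A_i=\{i,i+1\}$ for $i\in E$, and $A=\bigcup_{i\in E}A_i$ (so $|A|=2M$). Let $S:\{0,\dots,N-1\}\to\{0,1\}$ be arbitrary (its values outside $A$ are unrestricted). Let $\theta\in(0,\pi/2)$ with $\sin\theta=\sqrt{2M/N}$, $k=\lfloor\pi/(4\theta)\rfloor$, $a_k=\frac{\sin((2k+1)\theta)}{\sqrt{2M}}$, $b_k=\frac{\cos((2k+1)\theta)}{\sqrt{N-2M}}$, and $\lambda(z)=a_k(-1)^{S(z)}$ for $z\in A$, $\lambda(z)=b_k(-1)^{S(z)}$ for $z\notin A$. Haar wavelet transform: for $k=1,\dots,n$ let $m=n-k+1$ and let $H_k$ be the $2^m\times2^m$ matrix with, for $0\le j<2^{m-1}$, $(H_k)_{j,2j}=(H_k)_{j,2j+1}=\frac1{\sqrt2}$, $(H_k)_{2^{m-1}+j,2j}=\frac1{\sqrt2}$, $(H_k)_{2^{m-1}+j,2j+1}=-\frac1{\sqrt2}$,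 all other entries $0$; let $W_k=\begin{pmatrix}H_k&0\\0&I_{2^n-2^m}\end{pmatrix}$ and $W=W_nW_{n-1}\cdots W_1$. *)

theory Defs
  imports Complex_Main
begin

text \<open>Vectors of length N are functions nat => real (only indices < N matter);
  matrices are functions nat => nat => real with explicit size.\<close>

definition matvec :: "nat \<Rightarrow> (nat \<Rightarrow> nat \<Rightarrow> real) \<Rightarrow> (nat \<Rightarrow> real) \<Rightarrow> nat \<Rightarrow> real" where
  "matvec d Mt v = (\<lambda>i. \<Sum>j<d. Mt i j * v j)"

definition haarH :: "nat \<Rightarrow> nat \<Rightarrow> nat \<Rightarrow> nat \<Rightarrow> real" where
  "haarH n k r c =
     (let m = n - k + 1; h = (2::nat) ^ (m - 1) in
      if r < h \<and> (c = 2 * r \<or> c = 2 * r + 1) then 1 / sqrt 2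
      else if h \<le> r \<and> r < 2 * h \<and> c = 2 * (r - h) then 1 / sqrt 2
      else if h \<le> r \<and> r < 2 * h \<and> c = 2 * (r - h) + 1 then - (1 / sqrt 2)
      else 0)"

definition haarW :: "nat \<Rightarrow> nat \<Rightarrow> nat \<Rightarrow> nat \<Rightarrow> real" where
  "haarW n k r c =
     (let m = n - k + 1 in
      if r < 2 ^ m \<and> c < 2 ^ m then haarH n k r c
      else if r < 2 ^ m \<or> c < 2 ^ m then 0
      else if r = c then 1 else 0)"

fun haar_partial :: "nat \<Rightarrow> nat \<Rightarrow> (nat \<Rightarrow> real) \<Rightarrow> nat \<Rightarrow> real" where
  "haar_partial n 0 v = v"
| "haar_partial n (Suc j) v = matvec (2 ^ n) (haarW n (Suc j)) (haar_partial n j v)"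

definition haar_transform :: "nat \<Rightarrow> (nat \<Rightarrow> real) \<Rightarrow> nat \<Rightarrow> real" where
  "haar_transform n v = haar_partial n n v"

definition pairs_set :: "nat set \<Rightarrow> nat set" where
  "pairs_set E = (\<Union>i\<in>E. {i, i + 1})"

definition grover_lambda :: "nat \<Rightarrow> nat \<Rightarrow> real \<Rightarrow> nat set \<Rightarrow> (nat \<Rightarrow> nat) \<Rightarrow> nat \<Rightarrow> real" where
  "grover_lambda N M \<theta> E S z =
     (let k = \<lfloor>pi / (4 * \<theta>)\<rfloor>;
          a = sin ((2 * of_int k + 1) * \<theta>) / sqrt (2 * real M);
          b = cos ((2 * of_int k + 1) * \<theta>) / sqrt (real N - 2 * real M)
      in (if z \<in> pairs_set E then a else b) * (-1) ^ S z)"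

end

theory Submission imports Defs begin

lemma sum_split_at:
  fixes f :: "nat \<Rightarrow> real"
  assumes "a \<le> b" shows "(\<Sum>r<b. f r) = (\<Sum>r<a. f r) + (\<Sum>r\<in>{a..<b}. f r)"
  using sum.atLeastLessThan_concat[of 0 a b f] assms by (simp add: atLeast0LessThan)

lemma sum_halves:
  fixes g :: "nat \<Rightarrow> real"
  shows "(\<Sum>r<2*h. g r) = (\<Sum>r<h. g r) + (\<Sum>r<h. g (h + r))"
proof -
  have "(\<Sum>r<2*h. g r) = (\<Sum>r<h. g r) + (\<Sum>r\<in>{h..<2*h}. g r)"
    by (rule sum_split_at) simp
  also have "(\<Sum>r\<in>{h..<2*h}. g r) = (\<Sum>r\<in>{0..<h}. g (r + h))"
    using sum.shift_bounds_nat_ivl[of g 0 h h] by (simp add: mult_2)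
  finally show ?thesis by (simp add: atLeast0LessThan add.commute)
qed

lemma sum_even_odd:
  fixes f :: "nat \<Rightarrow> real"
  shows "(\<Sum>c<2*h. f c) = (\<Sum>r<h. f (2*r) + f (2*r+1))"
  by (induction h) (simp_all add: algebra_simps)

lemma energy:
  fixes P Q :: "nat \<Rightarrow> real"
  assumes "\<And>r. r < h \<Longrightarrow> Q r = (P (2*r) + P (2*r+1)) / sqrt 2"
    and "\<And>r. r < h \<Longrightarrow> Q (h + r) = (P (2*r) - P (2*r+1)) / sqrt 2"
  shows "(\<Sum>r<2*h. Q r ^ 2) = (\<Sum>c<2*h. P c ^ 2)"
proof -
  have "(\<Sum>r<2*h. Q r ^ 2) = (\<Sum>r<h. Q r ^ 2 + Q (h+r) ^ 2)"
    by (simp add: sum_halves sum.distrib)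
  also have "\<dots> = (\<Sum>r<h. P (2*r) ^ 2 + P (2*r+1) ^ 2)"
  proof (rule sum.cong)
    fix r assume "r \<in> {..<h}"
    then show "Q r ^ 2 + Q (h+r) ^ 2 = P (2*r) ^ 2 + P (2*r+1) ^ 2"
    proof -
      have r: "r < h" using \<open>r \<in> {..<h}\<close> by simp
      have "Q r ^ 2 + Q (h+r) ^ 2 = ((P (2*r) + P (2*r+1))^2 + (P (2*r) - P (2*r+1))^2) / 2"
        using assms(1)[OF r] assms(2)[OF r] by (simp add: power_divide)
      also have "\<dots> = P (2*r) ^ 2 + P (2*r+1) ^ 2" by (simp add: power2_eq_square algebra_simps)
      finally show ?thesis .
    qed
  qed simp
  also have "\<dots> = (\<Sum>c<2*h. P c ^ 2)" by (simp add: sum_even_odd)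
  finally show ?thesis .
qed


lemma pow_facts:
  assumes "1 \<le> k" "k \<le> n"
  shows "(2::nat) ^ (n - k + 1) = 2 * 2 ^ (n - k)" "n - k + 1 - 1 = n - k"
        "2 * (2::nat) ^ (n - k) \<le> 2 ^ n"
proof -
  show "(2::nat) ^ (n - k + 1) = 2 * 2 ^ (n - k)" by simp
  show "n - k + 1 - 1 = n - k" by simp
  have "(2::nat) ^ (n - k + 1) \<le> 2 ^ n" by (rule power_increasing) (use assms in auto)
  then show "2 * (2::nat) ^ (n - k) \<le> 2 ^ n" by simp
qed

lemma row1:
  assumes "1 \<le> k" "k \<le> n" "r < 2 ^ (n - k)"
  shows "matvec (2^n) (haarW n k) v r = (v (2*r) + v (2*r+1)) / sqrt 2"
proof -
  note pf = pow_facts[OF assms(1,2)]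
  have "\<And>c. c < 2^n \<Longrightarrow> haarW n k r c * v c =
      (if c = 2*r then v c / sqrt 2 else 0) + (if c = 2*r+1 then v c / sqrt 2 else 0)"
    using assms(3) pf by (auto simp: haarW_def haarH_def Let_def)
  then have "matvec (2^n) (haarW n k) v r = (\<Sum>c<2^n.
      (if c = 2*r then v c / sqrt 2 else 0) + (if c = 2*r+1 then v c / sqrt 2 else 0))"
    unfolding matvec_def by (intro sum.cong) auto
  also have "\<dots> = (v (2*r) + v (2*r+1)) / sqrt 2"
    using assms(3) pf by (simp add: sum.distrib add_divide_distrib)
  finally show ?thesis .
qed

lemma row2:
  assumes "1 \<le> k" "k \<le> n" "r < 2 ^ (n - k)"
  shows "matvec (2^n) (haarW n k) v (2 ^ (n - k) + r) = (v (2*r) - v (2*r+1)) / sqrt 2"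
proof -
  note pf = pow_facts[OF assms(1,2)]
  have "\<And>c. c < 2^n \<Longrightarrow> haarW n k (2 ^ (n - k) + r) c * v c =
      (if c = 2*r then v c / sqrt 2 else 0) - (if c = 2*r+1 then v c / sqrt 2 else 0)"
    using assms(3) pf by (auto simp: haarW_def haarH_def Let_def)
  then have "matvec (2^n) (haarW n k) v (2 ^ (n - k) + r) = (\<Sum>c<2^n.
      (if c = 2*r then v c / sqrt 2 else 0) - (if c = 2*r+1 then v c / sqrt 2 else 0))"
    unfolding matvec_def by (intro sum.cong) auto
  also have "\<dots> = (v (2*r) - v (2*r+1)) / sqrt 2"
    using assms(3) pf by (simp add: sum_subtractf diff_divide_distrib)
  finally show ?thesis .
qed

lemma row3:
  assumes "1 \<le> k" "k \<le> n" "2 * 2 ^ (n - k) \<le> r" "r < 2 ^ n"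
  shows "matvec (2^n) (haarW n k) v r = v r"
proof -
  note pf = pow_facts[OF assms(1,2)]
  have "\<And>c. c < 2^n \<Longrightarrow> haarW n k r c * v c = (if c = r then v c else 0)"
    using assms(3) pf by (auto simp: haarW_def haarH_def Let_def)
  then have "matvec (2^n) (haarW n k) v r = (\<Sum>c<2^n. if c = r then v c else 0)"
    unfolding matvec_def by (intro sum.cong) auto
  also have "\<dots> = v r" using assms(4) by simp
  finally show ?thesis .
qed


lemma partial:
  assumes "1 \<le> j" "j \<le> n"
  shows "(\<forall>r. 2^(n-1) \<le> r \<longrightarrow> r < 2^n \<longrightarrow> haar_partial n j v r = haar_partial n 1 v r)
    \<and> (\<Sum>r<2^(n-1). (haar_partial n j v r)^2) = (\<Sum>r<2^(n-1). (haar_partial n 1 v r)^2)"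
  using assms(1,2)
proof (induction j rule: dec_induct)
  case base then show ?case by simp
next
  case (step j)
  let ?P = "haar_partial n j v"
  let ?Q = "haar_partial n (Suc j) v"
  let ?h = "(2::nat) ^ (n - Suc j)"
  have Q: "?Q = matvec (2^n) (haarW n (Suc j)) ?P" by simp
  have k1: "1 \<le> Suc j" and k2: "Suc j \<le> n" using step by auto
  have hh: "2 * ?h \<le> 2 ^ (n-1)"
  proof -
    have "2 * ?h = 2 ^ (Suc (n - Suc j))" by simp
    also have "\<dots> \<le> 2 ^ (n - 1)" by (rule power_increasing) (use step in auto)
    finally show ?thesis .
  qed
  have hn: "(2::nat) ^ (n-1) \<le> 2 ^ n" by (rule power_increasing) auto
  have same: "?Q r = ?P r" if "2 * ?h \<le> r" "r < 2^n" for r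
    unfolding Q by (rule row3[OF k1 k2 that])
  have IH: "(\<forall>r. 2^(n-1) \<le> r \<longrightarrow> r < 2^n \<longrightarrow> ?P r = haar_partial n 1 v r)"
    "(\<Sum>r<2^(n-1). (?P r)^2) = (\<Sum>r<2^(n-1). (haar_partial n 1 v r)^2)"
    using step by auto
  have "(\<Sum>r<2^(n-1). (?Q r)^2) = (\<Sum>r<2 * ?h. (?Q r)^2) + (\<Sum>r\<in>{2 * ?h..<2^(n-1)}. (?Q r)^2)"
    by (rule sum_split_at[OF hh])
  also have "(\<Sum>r<2 * ?h. (?Q r)^2) = (\<Sum>r<2 * ?h. (?P r)^2)"
    by (rule energy) (unfold Q, (rule row1[OF k1 k2] row2[OF k1 k2]; assumption)+)
  also have "(\<Sum>r\<in>{2 * ?h..<2^(n-1)}. (?Q r)^2) = (\<Sum>r\<in>{2 * ?h..<2^(n-1)}. (?P r)^2)"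
  proof (intro sum.cong refl)
    fix r assume r: "r \<in> {2 * ?h..<2^(n-1)}"
    then have "r < 2^n" using hn by (meson atLeastLessThan_iff less_le_trans)
    then show "(?Q r)^2 = (?P r)^2" using same r by simp
  qed
  also have "(\<Sum>r<2 * ?h. (?P r)^2) + (\<Sum>r\<in>{2 * ?h..<2^(n-1)}. (?P r)^2) = (\<Sum>r<2^(n-1). (?P r)^2)"
    by (rule sum_split_at[OF hh, symmetric])
  finally have "(\<Sum>r<2^(n-1). (?Q r)^2) = (\<Sum>r<2^(n-1). (haar_partial n 1 v r)^2)"
    using IH(2) by simp
  moreover have "\<forall>r. 2^(n-1) \<le> r \<longrightarrow> r < 2^n \<longrightarrow> ?Q r = haar_partial n 1 v r"
    using same IH(1) hh by auto
  ultimately show ?case by blast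
qed


lemma trig_bound:
  fixes \<theta> :: real
  assumes "0 < \<theta>" "\<theta> < pi / 2"
  shows "cos ((2 * of_int \<lfloor>pi / (4 * \<theta>)\<rfloor> + 1) * \<theta>) ^ 2 \<le> sin \<theta> ^ 2"
proof -
  define k where "k = \<lfloor>pi / (4 * \<theta>)\<rfloor>"
  have k1: "of_int k \<le> pi / (4 * \<theta>)" unfolding k_def by simp
  have k2: "pi / (4 * \<theta>) < of_int k + 1" unfolding k_def by linarith
  have a1: "of_int k * (4 * \<theta>) \<le> pi" using k1 assms(1) by (simp add: le_divide_eq)
  have a2: "pi < (of_int k + 1) * (4 * \<theta>)" using k2 assms(1) by (simp add: divide_less_eq)
  define t where "t = (2 * of_int k + 1) * \<theta> - pi / 2"
  have t1: "t \<le> \<theta>" using a1 unfolding t_def by (simp add: algebra_simps)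
  have t2: "- \<theta> < t" using a2 unfolding t_def by (simp add: algebra_simps)
  have c: "cos ((2 * of_int k + 1) * \<theta>) = - sin t"
    unfolding t_def by (simp add: cos_diff sin_diff)
  have s1: "sin t \<le> sin \<theta>" by (rule sin_monotone_2pi_le) (use t1 t2 assms in auto)
  have s2: "sin (-t) \<le> sin \<theta>" by (rule sin_monotone_2pi_le) (use t1 t2 assms in auto)
  have "\<bar>sin t\<bar> \<le> sin \<theta>" using s1 s2 by simp
  then have "\<bar>sin t\<bar> ^ 2 \<le> sin \<theta> ^ 2" by (rule power_mono) simp
  then show ?thesis unfolding k_def[symmetric] c by simp
qed


theorem mainTheorem19:
  fixes n N M :: nat and E :: "nat set" and S :: "nat \<Rightarrow> nat" and \<theta> :: real
  assumes hn: "n \<ge> 1" and hN: "N = 2 ^ n"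
    and hM: "M \<ge> 1" and hMN: "2 * M < N"
    and hE: "E \<subseteq> {0..<N}" and hcard: "card E = M" and heven: "\<forall>i\<in>E. even i"
    and hS: "\<forall>z. S z \<in> {0, 1}"
    and h\<theta>: "0 < \<theta>" "\<theta> < pi / 2" and hsin: "sin \<theta> = sqrt (2 * real M / real N)"
  shows "((\<forall>i\<in>E. S i = S (i + 1)) \<longrightarrow>
            (\<Sum>z<N div 2. \<bar>haar_transform n (grover_lambda N M \<theta> E S) z\<bar> ^ 2)
              \<ge> 1 - 2 * real M / real N)
       \<and> ((\<forall>i\<in>E. S i \<noteq> S (i + 1)) \<longrightarrow>
            (\<Sum>z\<in>{N div 2..<N}. \<bar>haar_transform n (grover_lambda N M \<theta> E S) z\<bar> ^ 2)
              \<ge> 1 - 2 * real M / real N)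
       \<and> ((\<forall>i\<in>E. S i = S (i + 1)) \<longrightarrow>
            (\<Sum>z<N div 2. \<bar>matvec N (haarW n 1) (grover_lambda N M \<theta> E S) z\<bar> ^ 2)
              \<ge> 1 - 2 * real M / real N)
       \<and> ((\<forall>i\<in>E. S i \<noteq> S (i + 1)) \<longrightarrow>
            (\<Sum>z\<in>{N div 2..<N}. \<bar>matvec N (haarW n 1) (grover_lambda N M \<theta> E S) z\<bar> ^ 2)
              \<ge> 1 - 2 * real M / real N)"
proof -
  define lam where "lam = grover_lambda N M \<theta> E S"
  define u where "u = matvec N (haarW n 1) lam"
  define h where "h = (2::nat) ^ (n - 1)"
  define x where "x = (2 * of_int \<lfloor>pi / (4 * \<theta>)\<rfloor> + 1) * \<theta>"
  define a where "a = sin x / sqrt (2 * real M)"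
  have Nh: "N = 2 * h" unfolding hN h_def using hn by (cases n) auto
  have Nd: "N div 2 = h" using Nh by simp
  have finE: "finite E" using hE finite_subset by blast
  have lamA: "lam z = a * (-1) ^ S z" if "z \<in> pairs_set E" for z
    using that unfolding lam_def grover_lambda_def a_def x_def Let_def by simp
  have inA: "i \<in> pairs_set E" "i + 1 \<in> pairs_set E" if "i \<in> E" for i
    using that unfolding pairs_set_def by auto
  have i2: "2 * (i div 2) = i" "i div 2 < h" if "i \<in> E" for i
    using that heven hE Nh by auto
  have u1: "u (i div 2) = (lam i + lam (i+1)) / sqrt 2" if "i \<in> E" for i
    using row1[of 1 n "i div 2" lam] i2[OF that] hn unfolding u_def hN h_def by simp
  have u2: "u (h + i div 2) = (lam i - lam (i+1)) / sqrt 2" if "i \<in> E" for i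
    using row2[of 1 n "i div 2" lam] i2[OF that] hn unfolding u_def hN h_def by simp
  have Sv: "S z = 0 \<or> S z = 1" for z using hS by auto
  have ua: "u (i div 2) ^ 2 = 2 * a ^ 2" if "i \<in> E" "S i = S (i + 1)" for i
  proof -
    have "u (i div 2) = (a * (-1) ^ S i + a * (-1) ^ S i) / sqrt 2"
      using u1[OF that(1)] lamA[OF inA(1)[OF that(1)]] lamA[OF inA(2)[OF that(1)]] that(2) by simp
    also have "\<dots> = 2 * a * (-1) ^ S i / sqrt 2" by simp
    finally have e: "u (i div 2) = 2 * a * (-1) ^ S i / sqrt 2" .
    have s: "((-1::real) ^ S i) ^ 2 = 1" using Sv[of i] by auto
    have "u (i div 2) ^ 2 = 4 * a^2 * ((-1::real) ^ S i) ^ 2 / 2"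
      unfolding e by (simp add: power_divide power_mult_distrib)
    then show ?thesis using s by simp
  qed
  have ub: "u (h + i div 2) ^ 2 = 2 * a ^ 2" if "i \<in> E" "S i \<noteq> S (i + 1)" for i
  proof -
    have "u (h + i div 2) = (a * (-1) ^ S i - a * (-1) ^ S (i+1)) / sqrt 2"
      using u2[OF that(1)] lamA[OF inA(1)[OF that(1)]] lamA[OF inA(2)[OF that(1)]] by simp
    moreover have "((-1::real) ^ S (i+1)) = - ((-1) ^ S i)" using Sv[of i] Sv[of "i+1"] that(2) by auto
    ultimately have e: "u (h + i div 2) = 2 * a * (-1) ^ S i / sqrt 2" by simp
    have s: "((-1::real) ^ S i) ^ 2 = 1" using Sv[of i] by auto
    have "u (h + i div 2) ^ 2 = 4 * a^2 * ((-1::real) ^ S i) ^ 2 / 2"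
      unfolding e by (simp add: power_divide power_mult_distrib)
    then show ?thesis using s by simp
  qed
  have inj1: "inj_on (\<lambda>i. i div 2) E"
  proof (rule inj_onI)
    fix i j assume ij: "i \<in> E" "j \<in> E" and e: "i div 2 = j div 2"
    show "i = j" using i2(1)[OF ij(1)] i2(1)[OF ij(2)] e by linarith
  qed
  have inj2: "inj_on (\<lambda>i. h + i div 2) E"
  proof (rule inj_onI)
    fix i j assume ij: "i \<in> E" "j \<in> E" and e: "h + i div 2 = h + j div 2"
    show "i = j" using i2(1)[OF ij(1)] i2(1)[OF ij(2)] e by linarith
  qed
  have Mpos: "0 < real M" using hM by simp
  have sumE: "(\<Sum>i\<in>E. 2 * a ^ 2) = sin x ^ 2"
  proof -
    have a2: "a ^ 2 = sin x ^ 2 / (2 * real M)" unfolding a_def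
      by (simp add: power_divide)
    have "(\<Sum>i\<in>E. 2 * a ^ 2) = real M * (2 * (sin x ^ 2 / (2 * real M)))" using hcard a2 by simp
    also have "real M * (2 * (sin x ^ 2 / (2 * real M))) = sin x ^ 2" using Mpos by simp
    finally show ?thesis .
  qed
  have bound: "sin x ^ 2 \<ge> 1 - 2 * real M / real N"
  proof -
    have "cos x ^ 2 \<le> sin \<theta> ^ 2" unfolding x_def by (rule trig_bound[OF h\<theta>])
    also have "sin \<theta> ^ 2 = 2 * real M / real N" using hsin by simp
    finally show ?thesis using sin_cos_squared_add[of x] by linarith
  qed
  have Wa: "(\<Sum>z<N div 2. \<bar>u z\<bar> ^ 2) \<ge> 1 - 2 * real M / real N" if hyp: "\<forall>i\<in>E. S i = S (i + 1)"
  proof -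
    have "(\<Sum>i\<in>E. 2 * a ^ 2) = (\<Sum>i\<in>E. u (i div 2) ^ 2)" using ua hyp by simp
    also have "\<dots> = (\<Sum>z\<in>(\<lambda>i. i div 2) ` E. u z ^ 2)" by (simp add: sum.reindex[OF inj1])
    also have "\<dots> \<le> (\<Sum>z<h. u z ^ 2)" by (rule sum_mono2) (use i2 in auto)
    finally show ?thesis using sumE bound Nd by simp
  qed
  have Wb: "(\<Sum>z\<in>{N div 2..<N}. \<bar>u z\<bar> ^ 2) \<ge> 1 - 2 * real M / real N" if hyp: "\<forall>i\<in>E. S i \<noteq> S (i + 1)"
  proof -
    have "(\<Sum>i\<in>E. 2 * a ^ 2) = (\<Sum>i\<in>E. u (h + i div 2) ^ 2)" using ub hyp by simp
    also have "\<dots> = (\<Sum>z\<in>(\<lambda>i. h + i div 2) ` E. u z ^ 2)" by (simp add: sum.reindex[OF inj2])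
    also have "\<dots> \<le> (\<Sum>z\<in>{h..<N}. u z ^ 2)" by (rule sum_mono2) (use i2 Nh in auto)
    finally show ?thesis using sumE bound Nd by simp
  qed
  have P1: "haar_partial n 1 lam = u" unfolding u_def hN by simp
  note part = partial[OF hn order_refl, of lam, unfolded P1]
  have T1: "(\<Sum>z<N div 2. \<bar>haar_transform n lam z\<bar> ^ 2) = (\<Sum>z<N div 2. \<bar>u z\<bar> ^ 2)"
    using part unfolding haar_transform_def Nd h_def by simp
  have T2: "(\<Sum>z\<in>{N div 2..<N}. \<bar>haar_transform n lam z\<bar> ^ 2) = (\<Sum>z\<in>{N div 2..<N}. \<bar>u z\<bar> ^ 2)"
  proof (intro sum.cong refl)
    fix z assume "z \<in> {N div 2..<N}"
    then have "2^(n-1) \<le> z" "z < 2^n" using Nd hN unfolding h_def by auto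
    then show "\<bar>haar_transform n lam z\<bar> ^ 2 = \<bar>u z\<bar> ^ 2"
      using part unfolding haar_transform_def by simp
  qed
  show ?thesis using Wa Wb T1 T2 unfolding lam_def[symmetric] u_def[symmetric] by simp
qed

end
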